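(* Let $(L,\Delta)$ be a differential field extending $k$, and let $R$ be a $\Delta$-subring of $L$ containing $k$. Suppose $e:R\to\mathcal D(L)$ is a $k$-linear homomorphism of $\Delta$-rings such that for every $i=0,1,\dots,t$ the map $\pi_i^L\circ e:R\to L$ is injective. Then $e$ extends uniquely to a homomorphism of $\Delta$-rings $\operatorname{Frac}(R)\to\mathcal D(L)$ (where $\operatorname{Frac}(R)\subseteq L$ carries the induced derivations).
   Context: Fix a field $k$ of characteristic zero, a finite-dimensional commutative $k$-algebra $B$ such that $B/\mathfrak n=k$ for every maximal ideal $\mathfrak n$ of $B$, a $k$-algebra homomorphism $\pi:B\to k$, and a $k$-basis $(\epsilon_0,\dots,\epsilon_\ell)$ of $B$ with $\pi(\epsilon_0)=1$, $\pi(\epsilon_i)=0$ for $i\neq0$. $\Delta=\{\delta_1,\dots,\delta_m\}$ denotes commuting $k$-linear derivations. For a $k$-algebra $R$, $\mathcal D(R):=B\otimes_kR$; if $R$ has derivations $\Delta$, $\mathcal D(R)$ is a $\Delta$-ring via $\delta_j(b\otimes r)=b\otimes\delta_j(r)$. Write $B=\prod_{i=0}^tB_i$ as a product of local $k$-algebras, let $\pi_i:B\to k$ be the projection onto $B_i$ followed by the residue map $B_i\to k$ (indexed so $\pi_0=\pi$), and let $\pi_i^R:\mathcal D(R)\to R$ be its base change to $R$. *)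

theory Defs
  imports Main
begin

text \<open>
L is a type 'L of class field, and k is
embedded in L by a ring homomorphism iota.  The base change D(L) = B (x)_k L is represented
by coordinates w.r.t. the k-basis eps 0, ..., eps ell of B, i.e. by functions
nat => 'L vanishing above ell; x represents the sum of eps i (x) x i.
\<close>

definition is_ring_ideal :: "'b::comm_ring_1 set \<Rightarrow> bool" where
  "is_ring_ideal I \<longleftrightarrow> 0 \<in> I \<and> (\<forall>x\<in>I. \<forall>y\<in>I. x + y \<in> I) \<and> (\<forall>x\<in>I. - x \<in> I)
     \<and> (\<forall>a. \<forall>x\<in>I. a * x \<in> I)"

definition is_maximal_ideal :: "'b::comm_ring_1 set \<Rightarrow> bool" where
  "is_maximal_ideal I \<longleftrightarrow> is_ring_ideal I \<and> I \<noteq> UNIV \<and>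
     (\<forall>J. is_ring_ideal J \<and> I \<subseteq> J \<longrightarrow> J = I \<or> J = UNIV)"

definition is_k_algebra :: "('k::field \<Rightarrow> 'b::comm_ring_1 \<Rightarrow> 'b) \<Rightarrow> bool" where
  "is_k_algebra sB \<longleftrightarrow>
     (\<forall>a b x. sB (a + b) x = sB a x + sB b x) \<and>
     (\<forall>a x y. sB a (x + y) = sB a x + sB a y) \<and>
     (\<forall>a b x. sB (a * b) x = sB a (sB b x)) \<and>
     (\<forall>x. sB 1 x = x) \<and>
     (\<forall>a x y. sB a (x * y) = sB a x * y)"

definition is_k_basis :: "('k::field \<Rightarrow> 'b::comm_ring_1 \<Rightarrow> 'b) \<Rightarrow> (nat \<Rightarrow> 'b) \<Rightarrow> nat \<Rightarrow> bool" where
  "is_k_basis sB eps ell \<longleftrightarrow>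
     (\<forall>b. \<exists>!c. (\<forall>i>ell. c i = 0) \<and> b = (\<Sum>i\<le>ell. sB (c i) (eps i)))"

definition B_coord :: "('k::field \<Rightarrow> 'b::comm_ring_1 \<Rightarrow> 'b) \<Rightarrow> (nat \<Rightarrow> 'b) \<Rightarrow> nat \<Rightarrow> 'b \<Rightarrow> nat \<Rightarrow> 'k" where
  "B_coord sB eps ell b = (THE c. (\<forall>i>ell. c i = 0) \<and> b = (\<Sum>i\<le>ell. sB (c i) (eps i)))"

definition is_k_alg_hom :: "('k::field \<Rightarrow> 'b::comm_ring_1 \<Rightarrow> 'b) \<Rightarrow> ('b \<Rightarrow> 'k) \<Rightarrow> bool" where
  "is_k_alg_hom sB \<phi> \<longleftrightarrow> (\<forall>x y. \<phi> (x + y) = \<phi> x + \<phi> y) \<and> (\<forall>x y. \<phi> (x * y) = \<phi> x * \<phi> y)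
     \<and> \<phi> 1 = 1 \<and> (\<forall>c x. \<phi> (sB c x) = c * \<phi> x)"

definition is_ring_hom :: "('k::ring_1 \<Rightarrow> 'L::ring_1) \<Rightarrow> bool" where
  "is_ring_hom \<iota> \<longleftrightarrow> (\<forall>a b. \<iota> (a + b) = \<iota> a + \<iota> b) \<and> (\<forall>a b. \<iota> (a * b) = \<iota> a * \<iota> b) \<and> \<iota> 1 = 1"

definition is_k_Delta_field :: "('k \<Rightarrow> 'L::field) \<Rightarrow> nat \<Rightarrow> (nat \<Rightarrow> 'L \<Rightarrow> 'L) \<Rightarrow> bool" where
  "is_k_Delta_field \<iota> m d \<longleftrightarrow>
     (\<forall>j<m. (\<forall>a b. d j (a + b) = d j a + d j b) \<and>
            (\<forall>a b. d j (a * b) = a * d j b + d j a * b) \<and>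
            (\<forall>c a. d j (\<iota> c * a) = \<iota> c * d j a)) \<and>
     (\<forall>j<m. \<forall>l<m. \<forall>a. d j (d l a) = d l (d j a))"

definition is_Delta_subring_over_k :: "('k \<Rightarrow> 'L::field) \<Rightarrow> nat \<Rightarrow> (nat \<Rightarrow> 'L \<Rightarrow> 'L) \<Rightarrow> 'L set \<Rightarrow> bool" where
  "is_Delta_subring_over_k \<iota> m d R \<longleftrightarrow>
     0 \<in> R \<and> 1 \<in> R \<and> (\<forall>x\<in>R. \<forall>y\<in>R. x + y \<in> R \<and> x * y \<in> R) \<and> (\<forall>x\<in>R. - x \<in> R) \<and>
     range \<iota> \<subseteq> R \<and> (\<forall>j<m. \<forall>x\<in>R. d j x \<in> R)"

definition Frac_in :: "'L::field set \<Rightarrow> 'L set" where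
  "Frac_in R = {a / b | a b. a \<in> R \<and> b \<in> R \<and> b \<noteq> 0}"

definition D_carrier :: "nat \<Rightarrow> (nat \<Rightarrow> 'L::field) set" where
  "D_carrier ell = {x. \<forall>i>ell. x i = 0}"

definition D_add :: "(nat \<Rightarrow> 'L::field) \<Rightarrow> (nat \<Rightarrow> 'L) \<Rightarrow> nat \<Rightarrow> 'L" where
  "D_add x y = (\<lambda>i. x i + y i)"

definition D_mult :: "('k::field \<Rightarrow> 'L::field) \<Rightarrow> ('k \<Rightarrow> 'b::comm_ring_1 \<Rightarrow> 'b) \<Rightarrow> (nat \<Rightarrow> 'b) \<Rightarrow> nat
    \<Rightarrow> (nat \<Rightarrow> 'L) \<Rightarrow> (nat \<Rightarrow> 'L) \<Rightarrow> nat \<Rightarrow> 'L" where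
  "D_mult \<iota> sB eps ell x y =
     (\<lambda>n. \<Sum>i\<le>ell. \<Sum>j\<le>ell. \<iota> (B_coord sB eps ell (eps i * eps j) n) * x i * y j)"

definition D_one :: "('k::field \<Rightarrow> 'L::field) \<Rightarrow> ('k \<Rightarrow> 'b::comm_ring_1 \<Rightarrow> 'b) \<Rightarrow> (nat \<Rightarrow> 'b) \<Rightarrow> nat
    \<Rightarrow> nat \<Rightarrow> 'L" where
  "D_one \<iota> sB eps ell = (\<lambda>n. \<iota> (B_coord sB eps ell 1 n))"

definition D_smult :: "('k \<Rightarrow> 'L::field) \<Rightarrow> 'k \<Rightarrow> (nat \<Rightarrow> 'L) \<Rightarrow> nat \<Rightarrow> 'L" where
  "D_smult \<iota> c x = (\<lambda>i. \<iota> c * x i)"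

text \<open>delta (b (x) r) = b (x) delta r.\<close>
definition D_der :: "('L::field \<Rightarrow> 'L) \<Rightarrow> (nat \<Rightarrow> 'L) \<Rightarrow> nat \<Rightarrow> 'L" where
  "D_der \<delta> x = (\<lambda>i. \<delta> (x i))"

text \<open>Base change phi^L : D(L) -> L of a k-algebra map phi : B -> k.\<close>
definition base_change :: "('k::field \<Rightarrow> 'L::field) \<Rightarrow> (nat \<Rightarrow> 'b) \<Rightarrow> nat \<Rightarrow> ('b \<Rightarrow> 'k)
    \<Rightarrow> (nat \<Rightarrow> 'L) \<Rightarrow> 'L" where
  "base_change \<iota> eps ell \<phi> x = (\<Sum>i\<le>ell. \<iota> (\<phi> (eps i)) * x i)"

definition is_Delta_hom_to_D :: "('k::field \<Rightarrow> 'L::field) \<Rightarrow> ('k \<Rightarrow> 'b::comm_ring_1 \<Rightarrow> 'b) \<Rightarrow> (nat \<Rightarrow> 'b)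
    \<Rightarrow> nat \<Rightarrow> nat \<Rightarrow> (nat \<Rightarrow> 'L \<Rightarrow> 'L) \<Rightarrow> 'L set \<Rightarrow> ('L \<Rightarrow> nat \<Rightarrow> 'L) \<Rightarrow> bool" where
  "is_Delta_hom_to_D \<iota> sB eps ell m d S f \<longleftrightarrow>
     (\<forall>x\<in>S. f x \<in> D_carrier ell) \<and>
     (\<forall>x\<in>S. \<forall>y\<in>S. f (x + y) = D_add (f x) (f y)) \<and>
     (\<forall>x\<in>S. \<forall>y\<in>S. f (x * y) = D_mult \<iota> sB eps ell (f x) (f y)) \<and>
     f 1 = D_one \<iota> sB eps ell \<and>
     (\<forall>j<m. \<forall>x\<in>S. f (d j x) = D_der (d j) (f x))"

end

theory Submission
  imports Defs "HOL.Vector_Spaces" "HOL-Algebra.Ring"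
begin


lemma sum4_perm: "(\<Sum>a\<in>A. \<Sum>q\<in>A. \<Sum>i\<in>A. \<Sum>p\<in>A. f a q i p) = (\<Sum>i\<in>A. \<Sum>p\<in>A. \<Sum>q\<in>A. \<Sum>a\<in>A. (f a q i p :: 'a::comm_monoid_add))"
proof -
  have "(\<Sum>a\<in>A. \<Sum>q\<in>A. \<Sum>i\<in>A. \<Sum>p\<in>A. f a q i p) = (\<Sum>a\<in>A. \<Sum>i\<in>A. \<Sum>q\<in>A. \<Sum>p\<in>A. f a q i p)"
    by (rule sum.cong[OF refl], rule sum.swap)
  also have "\<dots> = (\<Sum>a\<in>A. \<Sum>i\<in>A. \<Sum>p\<in>A. \<Sum>q\<in>A. f a q i p)"
    by (rule sum.cong[OF refl], rule sum.cong[OF refl], rule sum.swap)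
  also have "\<dots> = (\<Sum>i\<in>A. \<Sum>a\<in>A. \<Sum>p\<in>A. \<Sum>q\<in>A. f a q i p)"
    by (rule sum.swap)
  also have "\<dots> = (\<Sum>i\<in>A. \<Sum>p\<in>A. \<Sum>a\<in>A. \<Sum>q\<in>A. f a q i p)"
    by (rule sum.cong[OF refl], rule sum.swap)
  also have "\<dots> = (\<Sum>i\<in>A. \<Sum>p\<in>A. \<Sum>q\<in>A. \<Sum>a\<in>A. f a q i p)"
    by (rule sum.cong[OF refl], rule sum.cong[OF refl], rule sum.swap)
  finally show ?thesis .
qed

lemma sum3_perm: "(\<Sum>a\<in>A. \<Sum>p\<in>A. \<Sum>q\<in>A. f a p q) = (\<Sum>p\<in>A. \<Sum>q\<in>A. \<Sum>a\<in>A. (f a p q :: 'a::comm_monoid_add))"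
proof -
  have "(\<Sum>a\<in>A. \<Sum>p\<in>A. \<Sum>q\<in>A. f a p q) = (\<Sum>p\<in>A. \<Sum>a\<in>A. \<Sum>q\<in>A. f a p q)" by (rule sum.swap)
  also have "\<dots> = (\<Sum>p\<in>A. \<Sum>q\<in>A. \<Sum>a\<in>A. f a p q)" by (rule sum.cong[OF refl], rule sum.swap)
  finally show ?thesis .
qed

lemma delta_sumL: "finite A \<Longrightarrow> i \<in> A \<Longrightarrow> (\<Sum>a\<in>A. (if a = i then 1 else 0) * (f a :: 'a::comm_semiring_1)) = f i"
proof -
  assume "finite A" "i \<in> A"
  have h: "(\<lambda>a. (if a = i then 1 else 0) * f a) = (\<lambda>a. if a = i then f a else 0)" by auto
  show ?thesis unfolding h using \<open>finite A\<close> \<open>i \<in> A\<close> by simp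
qed

lemma delta_sumM: "finite A \<Longrightarrow> i \<in> A \<Longrightarrow> (\<Sum>a\<in>A. u * (if a = i then 1 else 0) * (f a :: 'a::comm_semiring_1)) = u * f i"
proof -
  assume "finite A" "i \<in> A"
  have h: "(\<lambda>a. u * (if a = i then 1 else 0) * f a) = (\<lambda>a. if a = i then u * f a else 0)" by auto
  show ?thesis unfolding h using \<open>finite A\<close> \<open>i \<in> A\<close> by simp
qed

locale Bsetup =
  fixes sB :: "'k::field \<Rightarrow> 'b::comm_ring_1 \<Rightarrow> 'b"
    and eps :: "nat \<Rightarrow> 'b" and ell :: nat
    and \<iota> :: "'k \<Rightarrow> 'L::field"
  assumes B_alg: "is_k_algebra sB"
    and B_basis: "is_k_basis sB eps ell"
    and k_in_L: "is_ring_hom \<iota>"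
begin

lemma sB_addL: "sB (a + b) x = sB a x + sB b x" using B_alg by (simp add: is_k_algebra_def)
lemma sB_addR: "sB a (x + y) = sB a x + sB a y" using B_alg by (simp add: is_k_algebra_def)
lemma sB_assoc: "sB a (sB b x) = sB (a * b) x" using B_alg by (simp add: is_k_algebra_def)
lemma sB_one: "sB 1 x = x" using B_alg by (simp add: is_k_algebra_def)
lemma sB_multL: "sB a (x * y) = sB a x * y" using B_alg by (simp add: is_k_algebra_def)
lemma sB_multR: "sB a (x * y) = x * sB a y"
  by (metis mult.commute sB_multL)

sublocale vs: vector_space sB
  by unfold_locales (simp_all add: sB_addL sB_addR sB_assoc sB_one)

abbreviation coord where "coord \<equiv> B_coord sB eps ell"

lemma coord_ex1: "\<exists>!c. (\<forall>i>ell. c i = 0) \<and> b = (\<Sum>i\<le>ell. sB (c i) (eps i))"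
  using B_basis by (simp add: is_k_basis_def)

lemma coord_props: "(\<forall>i>ell. coord b i = 0) \<and> b = (\<Sum>i\<le>ell. sB (coord b i) (eps i))"
  unfolding B_coord_def by (rule theI'[OF coord_ex1])

lemma coord_zero: "i > ell \<Longrightarrow> coord b i = 0" using coord_props by blast
lemma coord_repr: "b = (\<Sum>i\<le>ell. sB (coord b i) (eps i))" using coord_props by blast

lemma coord_unique: "(\<forall>i>ell. c i = 0) \<Longrightarrow> b = (\<Sum>i\<le>ell. sB (c i) (eps i)) \<Longrightarrow> coord b = c"
  unfolding B_coord_def by (rule the1_equality[OF coord_ex1]) auto

lemma coord_add: "coord (x + y) n = coord x n + coord y n"
proof -
  have "coord (x + y) = (\<lambda>n. coord x n + coord y n)"
    apply (rule coord_unique)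
    apply (simp add: coord_zero)
    apply (subst coord_repr[of x], subst coord_repr[of y])
    by (simp add: sB_addL sum.distrib)
  thus ?thesis by simp
qed

lemma coord_0: "coord 0 n = 0"
proof -
  have "coord 0 = (\<lambda>n. 0)"
    by (rule coord_unique) auto
  thus ?thesis by simp
qed

lemma coord_sum: "finite A \<Longrightarrow> coord (sum f A) n = (\<Sum>j\<in>A. coord (f j) n)"
  by (induction A rule: finite_induct) (simp_all add: coord_0 coord_add)

lemma coord_smul: "coord (sB a x) n = a * coord x n"
proof -
  have "coord (sB a x) = (\<lambda>n. a * coord x n)"
    apply (rule coord_unique)
    apply (simp add: coord_zero)
    apply (subst coord_repr[of x])
    by (simp add: vs.scale_sum_right sB_assoc)
  thus ?thesis by simp
qed

lemma coord_eps: "j \<le> ell \<Longrightarrow> coord (eps j) n = (if n = j then 1 else 0)"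
proof -
  assume j: "j \<le> ell"
  have "coord (eps j) = (\<lambda>n. if n = j then 1 else 0)"
    apply (rule coord_unique)
    using j apply simp
  proof -
    have h: "(\<lambda>i. sB (if i = j then 1 else 0) (eps i)) = (\<lambda>i. if i = j then eps j else 0)"
      by (auto simp: sB_one vs.scale_zero_left)
    show "eps j = (\<Sum>i\<le>ell. sB (if i = j then 1 else 0) (eps i))" unfolding h using j by simp
  qed
  thus ?thesis by simp
qed

definition cc where "cc i j n = coord (eps i * eps j) n"


lemma mult_repr: "x * y = (\<Sum>i\<le>ell. \<Sum>j\<le>ell. sB (coord x i * coord y j) (eps i * eps j))"
proof -
  have "x * y = (\<Sum>i\<le>ell. sB (coord x i) (eps i)) * (\<Sum>j\<le>ell. sB (coord y j) (eps j))"
    using coord_repr by metis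
  also have "\<dots> = (\<Sum>i\<le>ell. \<Sum>j\<le>ell. sB (coord x i) (eps i) * sB (coord y j) (eps j))"
    by (rule sum_product)
  also have "\<dots> = (\<Sum>i\<le>ell. \<Sum>j\<le>ell. sB (coord x i * coord y j) (eps i * eps j))"
  proof (intro sum.cong refl)
    fix i j
    show "sB (coord x i) (eps i) * sB (coord y j) (eps j) = sB (coord x i * coord y j) (eps i * eps j)"
      by (metis sB_multL sB_multR sB_assoc)
  qed
  finally show ?thesis .
qed

lemma coord_mult: "coord (x * y) n = (\<Sum>i\<le>ell. \<Sum>j\<le>ell. coord x i * coord y j * cc i j n)"
proof -
  have "coord (x * y) n = coord (\<Sum>i\<le>ell. \<Sum>j\<le>ell. sB (coord x i * coord y j) (eps i * eps j)) n"
    using mult_repr[of x y] by simp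
  also have "\<dots> = (\<Sum>i\<le>ell. \<Sum>j\<le>ell. coord x i * coord y j * cc i j n)"
    by (simp add: coord_sum coord_smul cc_def)
  finally show ?thesis .
qed

lemma cc_assoc:
  "(\<Sum>j\<le>ell. cc p q j * cc i j n) = (\<Sum>j\<le>ell. cc i p j * cc j q n)"
  if "i \<le> ell" "p \<le> ell" "q \<le> ell"
proof -
  have "coord (eps i * (eps p * eps q)) n = (\<Sum>a\<le>ell. \<Sum>j\<le>ell. (if a = i then 1 else 0) * cc p q j * cc a j n)"
    by (subst coord_mult) (simp add: coord_eps that cc_def[symmetric])
  also have "\<dots> = (\<Sum>a\<le>ell. (if a = i then 1 else 0) * (\<Sum>j\<le>ell. cc p q j * cc a j n))"
    by (simp add: sum_distrib_left mult.assoc)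
  also have "\<dots> = (\<Sum>j\<le>ell. cc p q j * cc i j n)"
    using that by (simp add: delta_sumL)
  finally have 1: "coord (eps i * (eps p * eps q)) n = (\<Sum>j\<le>ell. cc p q j * cc i j n)" .
  have "coord ((eps i * eps p) * eps q) n = (\<Sum>a\<le>ell. \<Sum>j\<le>ell. cc i p a * (if j = q then 1 else 0) * cc a j n)"
    by (subst coord_mult) (simp add: coord_eps that cc_def[symmetric])
  also have "\<dots> = (\<Sum>a\<le>ell. cc i p a * cc a q n)"
    using that by (simp add: delta_sumM)
  finally have 2: "coord ((eps i * eps p) * eps q) n = (\<Sum>j\<le>ell. cc i p j * cc j q n)" .
  show ?thesis using 1 2 by (simp add: mult.assoc)
qed

lemma cc_comm: "cc i j n = cc j i n" by (simp add: cc_def mult.commute)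

lemma cc_zero: "n > ell \<Longrightarrow> cc i j n = 0" by (simp add: cc_def coord_zero)

lemma one_cc: "j \<le> ell \<Longrightarrow> (\<Sum>i\<le>ell. coord 1 i * cc i j n) = (if n = j then 1 else 0)"
proof -
  assume j: "j \<le> ell"
  have "coord (1 * eps j) n = (\<Sum>i\<le>ell. \<Sum>b\<le>ell. coord 1 i * (if b = j then 1 else 0) * cc i b n)"
    by (subst coord_mult) (simp add: coord_eps j cc_def[symmetric])
  also have "\<dots> = (\<Sum>i\<le>ell. coord 1 i * cc i j n)"
    using j by (simp add: delta_sumM)
  finally show ?thesis using j by (simp add: coord_eps)
qed

lemma iota_add: "\<iota> (a + b) = \<iota> a + \<iota> b" using k_in_L by (simp add: is_ring_hom_def)
lemma iota_mult: "\<iota> (a * b) = \<iota> a * \<iota> b" using k_in_L by (simp add: is_ring_hom_def)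
lemma iota_one: "\<iota> 1 = 1" using k_in_L by (simp add: is_ring_hom_def)
lemma iota_zero: "\<iota> 0 = 0"
proof -
  have "\<iota> 0 + \<iota> 0 = \<iota> 0 + 0" using iota_add[of 0 0] by simp
  thus ?thesis by (rule add_left_imp_eq)
qed
lemma iota_sum: "\<iota> (sum f A) = (\<Sum>a\<in>A. \<iota> (f a))"
  by (induction A rule: infinite_finite_induct) (simp_all add: iota_zero iota_add)
lemma iota_minus: "\<iota> (- a) = - \<iota> a"
proof -
  have "\<iota> a + \<iota> (- a) = 0" using iota_add[of a "-a"] iota_zero by simp
  from minus_unique[OF this] show ?thesis by simp
qed
lemma iota_diff: "\<iota> (a - b) = \<iota> a - \<iota> b"
  using iota_add[of a "-b"] iota_minus by simp

abbreviation Dm where "Dm \<equiv> D_mult \<iota> sB eps ell"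
abbreviation Done where "Done \<equiv> D_one \<iota> sB eps ell"

lemma Dm_eq: "Dm x y n = (\<Sum>i\<le>ell. \<Sum>j\<le>ell. \<iota> (cc i j n) * x i * y j)"
  by (simp add: D_mult_def cc_def)

lemma Dm_assoc: "Dm (Dm x y) z = Dm x (Dm y z)"
proof
  fix n
  have "Dm (Dm x y) z n = (\<Sum>a\<le>ell. \<Sum>q\<le>ell. \<Sum>i\<le>ell. \<Sum>p\<le>ell. \<iota> (cc i p a) * \<iota> (cc a q n) * x i * y p * z q)"
    by (simp add: Dm_eq sum_distrib_left sum_distrib_right mult_ac)
  also have "\<dots> = (\<Sum>i\<le>ell. \<Sum>p\<le>ell. \<Sum>q\<le>ell. \<Sum>a\<le>ell. \<iota> (cc i p a) * \<iota> (cc a q n) * x i * y p * z q)"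
    by (rule sum4_perm)
  also have "\<dots> = (\<Sum>i\<le>ell. \<Sum>p\<le>ell. \<Sum>q\<le>ell. x i * y p * z q * \<iota> (\<Sum>a\<le>ell. cc i p a * cc a q n))"
    by (simp add: iota_sum iota_mult sum_distrib_left mult_ac)
  also have "\<dots> = (\<Sum>i\<le>ell. \<Sum>p\<le>ell. \<Sum>q\<le>ell. x i * y p * z q * \<iota> (\<Sum>a\<le>ell. cc p q a * cc i a n))"
    by (intro sum.cong refl) (simp add: cc_assoc)
  also have "\<dots> = (\<Sum>i\<le>ell. \<Sum>p\<le>ell. \<Sum>q\<le>ell. \<Sum>a\<le>ell. \<iota> (cc p q a) * \<iota> (cc i a n) * x i * y p * z q)"
    by (simp add: iota_sum iota_mult sum_distrib_left mult_ac)
  also have "\<dots> = (\<Sum>i\<le>ell. \<Sum>a\<le>ell. \<Sum>p\<le>ell. \<Sum>q\<le>ell. \<iota> (cc p q a) * \<iota> (cc i a n) * x i * y p * z q)"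
    by (rule sum.cong[OF refl], rule sum3_perm[symmetric])
  also have "\<dots> = Dm x (Dm y z) n"
    by (simp add: Dm_eq sum_distrib_left sum_distrib_right mult_ac)
  finally show "Dm (Dm x y) z n = Dm x (Dm y z) n" .
qed

lemma Dm_comm: "Dm x y = Dm y x"
proof
  fix n
  have "Dm x y n = (\<Sum>j\<le>ell. \<Sum>i\<le>ell. \<iota> (cc i j n) * x i * y j)"
    unfolding Dm_eq by (rule sum.swap)
  also have "\<dots> = Dm y x n"
    unfolding Dm_eq by (simp add: cc_comm mult_ac)
  finally show "Dm x y n = Dm y x n" .
qed

lemma Dm_one: "x \<in> D_carrier ell \<Longrightarrow> Dm Done x = x"
proof
  fix n assume x: "x \<in> D_carrier ell"
  have "Dm Done x n = (\<Sum>j\<le>ell. x j * \<iota> (\<Sum>i\<le>ell. coord 1 i * cc i j n))"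
    unfolding Dm_eq D_one_def
    by (subst sum.swap) (simp add: iota_sum iota_mult sum_distrib_left mult_ac)
  also have "\<dots> = (\<Sum>j\<le>ell. x j * (if n = j then 1 else 0))"
    by (intro sum.cong refl) (simp add: one_cc iota_one iota_zero)
  also have "\<dots> = x n"
  proof -
    have h: "(\<lambda>j. x j * (if n = j then 1 else 0)) = (\<lambda>j. if n = j then x j else 0)" by auto
    show ?thesis unfolding h using x by (auto simp: D_carrier_def not_le)
  qed
  finally show "Dm Done x n = x n" .
qed

lemma Dm_closed: "Dm x y \<in> D_carrier ell"
  by (simp add: D_carrier_def Dm_eq cc_zero iota_zero)

lemma Done_closed: "Done \<in> D_carrier ell"
  by (simp add: D_carrier_def D_one_def coord_zero iota_zero)

lemma Dm_distr: "Dm (D_add x y) z = D_add (Dm x z) (Dm y z)"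
  by (rule ext) (simp add: Dm_eq D_add_def distrib_left distrib_right sum.distrib)

definition DR :: "(nat \<Rightarrow> 'L) ring" where
  "DR = \<lparr>carrier = D_carrier ell, monoid.mult = Dm, one = Done, zero = (\<lambda>_. 0), add = D_add\<rparr>"

lemma DR_simps[simp]: "carrier DR = D_carrier ell" "monoid.mult DR = Dm" "one DR = Done"
  "zero DR = (\<lambda>_. 0)" "add DR = D_add"
  by (simp_all add: DR_def)

lemma DR_cring: "cring DR"
proof (rule cringI)
  show "abelian_group DR"
    apply (rule abelian_groupI)
         apply (auto simp: D_carrier_def D_add_def add_ac)
    apply (rule_tac x="\<lambda>n. - x n" in exI)
    by auto
  show "comm_monoid DR"
    by (rule comm_monoidI) (auto simp: Dm_closed Done_closed Dm_assoc Dm_one intro: Dm_comm)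
  show "\<And>x y z. x \<in> carrier DR \<Longrightarrow> y \<in> carrier DR \<Longrightarrow> z \<in> carrier DR \<Longrightarrow>
     (x \<oplus>\<^bsub>DR\<^esub> y) \<otimes>\<^bsub>DR\<^esub> z = x \<otimes>\<^bsub>DR\<^esub> z \<oplus>\<^bsub>DR\<^esub> y \<otimes>\<^bsub>DR\<^esub> z"
    by (simp add: Dm_distr)
qed

end



context Bsetup
begin

definition emb :: "'b \<Rightarrow> nat \<Rightarrow> 'L" where "emb b = (\<lambda>n. \<iota> (coord b n))"
definition scal :: "'L \<Rightarrow> (nat \<Rightarrow> 'L) \<Rightarrow> nat \<Rightarrow> 'L" where "scal a z = (\<lambda>n. a * z n)"

lemma emb_carrier: "emb b \<in> D_carrier ell"
  by (simp add: emb_def D_carrier_def coord_zero iota_zero)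
lemma emb_add: "emb (x + y) = D_add (emb x) (emb y)"
  by (rule ext) (simp add: emb_def D_add_def coord_add iota_add)
lemma emb_mult: "emb (x * y) = Dm (emb x) (emb y)"
  by (rule ext) (simp add: emb_def Dm_eq coord_mult iota_sum iota_mult mult_ac)
lemma emb_one: "emb 1 = Done"
  by (simp add: emb_def D_one_def)
lemma emb_zero: "emb 0 = (\<lambda>_. 0)"
  by (simp add: emb_def coord_0 iota_zero)
lemma emb_smul: "emb (sB c x) = scal (\<iota> c) (emb x)"
  by (rule ext) (simp add: emb_def scal_def coord_smul iota_mult)
lemma emb_neg: "emb (- x) = scal (-1) (emb x)"
proof -
  have h: "- x = sB (-1) x" by (metis sB_one vs.scale_minus_left)
  have "emb (- x) = emb (sB (-1) x)" by (subst h) (rule refl)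
  also have "\<dots> = scal (\<iota> (-1)) (emb x)" by (rule emb_smul)
  finally show ?thesis by (simp add: iota_minus iota_one)
qed

lemma scal_Dm: "Dm (scal a x) z = scal a (Dm x z)"
  by (rule ext) (simp add: Dm_eq scal_def sum_distrib_left mult_ac)
lemma scal_eq: "z \<in> D_carrier ell \<Longrightarrow> scal a z = Dm (scal a Done) z"
  by (simp add: scal_Dm Dm_one)
lemma scal_carrier: "z \<in> D_carrier ell \<Longrightarrow> scal a z \<in> D_carrier ell"
  by (simp add: scal_def D_carrier_def)

definition Did :: "(nat \<Rightarrow> 'L) set \<Rightarrow> bool" where
  "Did J \<longleftrightarrow> J \<subseteq> D_carrier ell \<and> (\<lambda>_. 0) \<in> J \<and> (\<forall>a\<in>J. \<forall>b\<in>J. D_add a b \<in> J)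
      \<and> (\<forall>a\<in>J. \<forall>r\<in>D_carrier ell. Dm r a \<in> J)"

lemma Did_scal: "Did J \<Longrightarrow> z \<in> J \<Longrightarrow> scal a z \<in> J"
proof -
  assume J: "Did J" and z: "z \<in> J"
  have zc: "z \<in> D_carrier ell" using J z by (auto simp: Did_def)
  have "scal a Done \<in> D_carrier ell" by (rule scal_carrier[OF Done_closed])
  hence "Dm (scal a Done) z \<in> J" using J z by (auto simp: Did_def)
  thus ?thesis using scal_eq[OF zc] by simp
qed

lemma Did_sum: assumes J: "Did J" shows "finite A \<Longrightarrow> (\<forall>i\<in>A. f i \<in> J) \<Longrightarrow> (\<lambda>n. \<Sum>i\<in>A. f i n) \<in> J"
proof (induction A rule: finite_induct)
  case empty thus ?case using J by (simp add: Did_def)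
next
  case (insert x F)
  have "(\<lambda>n. \<Sum>i\<in>insert x F. f i n) = D_add (f x) (\<lambda>n. \<Sum>i\<in>F. f i n)"
    using insert by (simp add: D_add_def)
  thus ?case using insert J unfolding Did_def by auto
qed

lemma exists_prime:
  assumes y: "y \<in> D_carrier ell" and ny: "\<forall>z\<in>D_carrier ell. Dm z y \<noteq> Done"
  shows "\<exists>M. Did M \<and> y \<in> M \<and> Done \<notin> M \<and>
     (\<forall>a\<in>D_carrier ell. \<forall>b\<in>D_carrier ell. Dm a b \<in> M \<longrightarrow> a \<in> M \<or> b \<in> M)"
proof -
  interpret D: cring DR by (rule DR_cring)
  define A where "A = {J. Did J \<and> y \<in> J \<and> Done \<notin> J}"
  define PI where "PI = {Dm z y | z. z \<in> D_carrier ell}"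
  have PI: "PI \<in> A"
  proof -
    have "Did PI" unfolding Did_def PI_def
    proof (intro conjI ballI)
      show "{Dm z y |z. z \<in> D_carrier ell} \<subseteq> D_carrier ell" using Dm_closed by auto
      have "Dm (\<lambda>_. 0) y = (\<lambda>_. 0)" by (rule ext) (simp add: Dm_eq)
      moreover have "(\<lambda>_. 0) \<in> D_carrier ell" by (simp add: D_carrier_def)
      ultimately show "(\<lambda>_. 0) \<in> {Dm z y |z. z \<in> D_carrier ell}" by force
      fix a b assume "a \<in> {Dm z y |z. z \<in> D_carrier ell}" "b \<in> {Dm z y |z. z \<in> D_carrier ell}"
      then obtain za zb where "za \<in> D_carrier ell" "zb \<in> D_carrier ell" "a = Dm za y" "b = Dm zb y" by auto
      then have "D_add a b = Dm (D_add za zb) y" using Dm_distr[of za zb y] by simp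
      then show "D_add a b \<in> {Dm z y |z. z \<in> D_carrier ell}"
        using D.a_closed[of za zb] \<open>za \<in> D_carrier ell\<close> \<open>zb \<in> D_carrier ell\<close> by auto
    next
      fix a r :: "nat \<Rightarrow> 'L" assume "a \<in> {Dm z y |z. z \<in> D_carrier ell}" "r \<in> D_carrier ell"
      then obtain za where "za \<in> D_carrier ell" "a = Dm za y" by auto
      then show "Dm r a \<in> {Dm z y |z. z \<in> D_carrier ell}"
        using Dm_assoc[of r za y] Dm_closed \<open>r \<in> D_carrier ell\<close> by (metis (mono_tags, lifting) mem_Collect_eq)
    qed
    moreover have "y \<in> PI" unfolding PI_def using Dm_one[OF y] Done_closed by (metis (mono_tags, lifting) mem_Collect_eq)
    moreover have "Done \<notin> PI" unfolding PI_def using ny by auto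
    ultimately show ?thesis by (simp add: A_def)
  qed
  have "\<exists>M\<in>A. \<forall>X\<in>A. M \<subseteq> X \<longrightarrow> X = M"
  proof (rule Zorn_Lemma2, intro ballI)
    fix C assume C: "C \<in> chains A"
    show "\<exists>U\<in>A. \<forall>X\<in>C. X \<subseteq> U"
    proof (cases "C = {}")
      case True thus ?thesis using PI by auto
    next
      case False
      have CA: "C \<subseteq> A" and ch: "\<forall>X\<in>C. \<forall>Y\<in>C. X \<subseteq> Y \<or> Y \<subseteq> X"
        using C by (auto simp: chains_def chain_subset_def)
      have "\<Union>C \<in> A"
        unfolding A_def Did_def
      proof (intro CollectI conjI ballI)
        show "\<Union>C \<subseteq> D_carrier ell" using CA by (auto simp: A_def Did_def)
        show "(\<lambda>_. 0) \<in> \<Union>C" using CA False by (auto simp: A_def Did_def)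
        show "y \<in> \<Union>C" using CA False by (auto simp: A_def Did_def)
        show "Done \<notin> \<Union>C" using CA by (auto simp: A_def Did_def)
        fix a b assume a: "a \<in> \<Union>C" and b: "b \<in> \<Union>C"
        then obtain X Y where XY: "X \<in> C" "Y \<in> C" "a \<in> X" "b \<in> Y" by auto
        show "D_add a b \<in> \<Union>C"
        proof (cases "X \<subseteq> Y")
          case True
          have "Did Y" using XY CA by (auto simp: A_def)
          hence "D_add a b \<in> Y" using True XY unfolding Did_def by blast
          thus ?thesis using XY by blast
        next
          case False
          hence "Y \<subseteq> X" using ch XY by blast
          have "Did X" using XY CA by (auto simp: A_def)
          hence "D_add a b \<in> X" using \<open>Y \<subseteq> X\<close> XY unfolding Did_def by blast
          thus ?thesis using XY by blast
        qed
      next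
        fix a r :: "nat \<Rightarrow> 'L" assume "a \<in> \<Union>C" "r \<in> D_carrier ell"
        then obtain X where X: "X \<in> C" "a \<in> X" by auto
        have "Did X" using X CA by (auto simp: A_def)
        hence "Dm r a \<in> X" using X \<open>r \<in> D_carrier ell\<close> unfolding Did_def by blast
        thus "Dm r a \<in> \<Union>C" using X by blast
      qed
      thus ?thesis by auto
    qed
  qed
  then obtain M where M: "M \<in> A" and Mmax: "\<forall>X\<in>A. M \<subseteq> X \<longrightarrow> X = M" by blast
  have MD: "Did M" "y \<in> M" "Done \<notin> M" using M by (auto simp: A_def)
  have prime: "a \<in> M \<or> b \<in> M" if a: "a \<in> D_carrier ell" and b: "b \<in> D_carrier ell" and ab: "Dm a b \<in> M" for a b
  proof (cases "a \<in> M")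
    case True thus ?thesis by simp
  next
    case False
    define J where "J = {x \<in> D_carrier ell. Dm a x \<in> M}"
    have "Did J" unfolding Did_def J_def
    proof (intro conjI ballI)
      show "{x \<in> D_carrier ell. Dm a x \<in> M} \<subseteq> D_carrier ell" by auto
      have "Dm a (\<lambda>_. 0) = (\<lambda>_. 0)" by (rule ext) (simp add: Dm_eq)
      thus "(\<lambda>_. 0) \<in> {x \<in> D_carrier ell. Dm a x \<in> M}" using MD by (simp add: Did_def D_carrier_def)
      fix u v assume "u \<in> {x \<in> D_carrier ell. Dm a x \<in> M}" "v \<in> {x \<in> D_carrier ell. Dm a x \<in> M}"
      thus "D_add u v \<in> {x \<in> D_carrier ell. Dm a x \<in> M}"
        using MD(1) D.a_closed[of u v] Dm_distr[of u v a] Dm_comm[of a] by (auto simp: Did_def)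
    next
      fix u r :: "nat \<Rightarrow> 'L" assume u: "u \<in> {x \<in> D_carrier ell. Dm a x \<in> M}" and r: "r \<in> D_carrier ell"
      have "Dm a (Dm r u) = Dm r (Dm a u)" by (simp only: Dm_assoc[symmetric] Dm_comm[of a r])
      thus "Dm r u \<in> {x \<in> D_carrier ell. Dm a x \<in> M}" using u r MD(1) Dm_closed by (auto simp: Did_def)
    qed
    moreover have "M \<subseteq> J" using MD(1) a unfolding J_def Did_def by (auto simp: Dm_comm)
    moreover have "Done \<notin> J"
    proof
      assume "Done \<in> J"
      hence "Dm a Done \<in> M" by (simp add: J_def)
      moreover have "Dm a Done = a" using Dm_comm[of a Done] Dm_one[OF a] by simp
      ultimately show False using False by simp
    qed
    ultimately have "J \<in> A" using MD by (auto simp: A_def)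
    hence "J = M" using Mmax \<open>M \<subseteq> J\<close> by blast
    moreover have "b \<in> J" using b ab by (simp add: J_def)
    ultimately show ?thesis by simp
  qed
  show ?thesis using MD prime by blast
qed

end



context Bsetup
begin

lemma ideal_smul: "is_ring_ideal P \<Longrightarrow> x \<in> P \<Longrightarrow> sB c x \<in> P"
proof -
  assume P: "is_ring_ideal P" and x: "x \<in> P"
  have "sB c x = sB c 1 * x" by (metis sB_multL mult_1)
  thus ?thesis using P x by (simp add: is_ring_ideal_def)
qed

lemma ideal_diff: "is_ring_ideal P \<Longrightarrow> x \<in> P \<Longrightarrow> y \<in> P \<Longrightarrow> x - y \<in> P"
  unfolding is_ring_ideal_def by (metis diff_conv_add_uminus)

lemma ideal_one: "is_ring_ideal P \<Longrightarrow> 1 \<notin> P \<Longrightarrow> sB c 1 \<in> P \<Longrightarrow> c = 0"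
proof (rule ccontr)
  assume P: "is_ring_ideal P" and n1: "1 \<notin> P" and c: "sB c 1 \<in> P" and "c \<noteq> 0"
  have "sB (inverse c) (sB c 1) = 1" using \<open>c \<noteq> 0\<close> by (simp add: sB_assoc sB_one)
  thus False using ideal_smul[OF P c, of "inverse c"] n1 by simp
qed

lemma poly_inv:
  assumes P: "is_ring_ideal P" and prime: "\<forall>x y. x * y \<in> P \<longrightarrow> x \<in> P \<or> y \<in> P"
    and n1: "1 \<notin> P" and b: "b \<notin> P"
  shows "\<forall>a. (\<Sum>j\<le>N. sB (a j) (b ^ j)) \<in> P \<longrightarrow> (\<exists>j\<le>N. a j \<noteq> 0) \<longrightarrow> (\<exists>b'. b * b' - 1 \<in> P)"
proof (induction N)
  case 0
  show ?case
  proof (intro allI impI)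
    fix a assume "(\<Sum>j\<le>0. sB (a j) (b ^ j)) \<in> P" "\<exists>j\<le>0. a j \<noteq> 0"
    hence "sB (a 0) 1 \<in> P" "a 0 \<noteq> 0" by auto
    thus "\<exists>b'. b * b' - 1 \<in> P" using ideal_one[OF P n1] by blast
  qed
next
  case (Suc N)
  show ?case
  proof (intro allI impI)
    fix a assume s: "(\<Sum>j\<le>Suc N. sB (a j) (b ^ j)) \<in> P" and nz: "\<exists>j\<le>Suc N. a j \<noteq> 0"
    define s where "s = (\<Sum>j\<le>N. sB (a (Suc j)) (b ^ j))"
    have "(\<Sum>j\<le>Suc N. sB (a j) (b ^ j)) = sB (a 0) 1 + (\<Sum>j\<le>N. sB (a (Suc j)) (b ^ Suc j))"
      by (subst sum.atMost_Suc_shift) simp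
    also have "(\<Sum>j\<le>N. sB (a (Suc j)) (b ^ Suc j)) = b * s"
      unfolding s_def sum_distrib_left by (simp add: sB_multR)
    finally have eq: "(\<Sum>j\<le>Suc N. sB (a j) (b ^ j)) = sB (a 0) 1 + b * s" .
    show "\<exists>b'. b * b' - 1 \<in> P"
    proof (cases "a 0 = 0")
      case False
      have "sB (inverse (a 0)) (sB (a 0) 1 + b * s) \<in> P"
        using ideal_smul[OF P] s eq by simp
      moreover have "sB (inverse (a 0)) (sB (a 0) 1 + b * s) = 1 + b * sB (inverse (a 0)) s"
        using False by (simp add: sB_addR sB_assoc sB_one sB_multR)
      ultimately have "1 + b * sB (inverse (a 0)) s \<in> P" by simp
      hence "- (1 + b * sB (inverse (a 0)) s) \<in> P" using P unfolding is_ring_ideal_def by blast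
      moreover have "b * (- sB (inverse (a 0)) s) - 1 = - (1 + b * sB (inverse (a 0)) s)" by (simp add: algebra_simps)
      ultimately show ?thesis by metis
    next
      case True
      hence "b * s \<in> P" using s eq by (simp add: vs.scale_zero_left)
      hence sP: "s \<in> P" using prime b by blast
      obtain j where j: "j \<le> Suc N" "a j \<noteq> 0" using nz by blast
      with True obtain j' where "j = Suc j'" by (cases j) auto
      hence "\<exists>j\<le>N. a (Suc j) \<noteq> 0" using j by auto
      thus ?thesis using spec[OF Suc.IH, of "\<lambda>j. a (Suc j)"] sP unfolding s_def by auto
    qed
  qed
qed

lemma span_all: "x \<in> vs.span (eps ` {..ell})"
proof -
  have "(\<Sum>i\<le>ell. sB (coord x i) (eps i)) \<in> vs.span (eps ` {..ell})"
    by (intro vs.span_sum vs.span_scale vs.span_base) auto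
  thus ?thesis using coord_repr[of x] by simp
qed

lemma dep_powers: fixes b :: 'b shows "\<exists>a. (\<Sum>j\<le>Suc ell. sB (a j) (b ^ j)) = 0 \<and> (\<exists>j\<le>Suc ell. a j \<noteq> (0::'k))"
proof (cases "inj_on (\<lambda>j. b ^ j) {..Suc ell}")
  case True
  define S where "S = (\<lambda>j. b ^ j) ` {..Suc ell}"
  have cS: "card S = Suc (Suc ell)" using True by (simp add: S_def card_image)
  have "vs.dependent S"
  proof (rule ccontr)
    assume ind: "vs.independent S"
    have "card S \<le> card (eps ` {..ell})"
    proof -
      have "S \<subseteq> vs.span (eps ` {..ell})" using span_all by blast
      thus ?thesis using vs.independent_span_bound[OF _ ind, of "eps ` {..ell}"] by simp
    qed
    also have "\<dots> \<le> Suc ell" using card_image_le[of "{..ell}" eps] by simp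
    finally show False using cS by simp
  qed
  then obtain u where u: "\<exists>v\<in>S. u v \<noteq> 0" "(\<Sum>v\<in>S. sB (u v) v) = 0"
    using vs.dependent_finite[of S] by (auto simp: S_def)
  have "(\<Sum>j\<le>Suc ell. sB (u (b ^ j)) (b ^ j)) = (\<Sum>v\<in>S. sB (u v) v)"
    unfolding S_def by (subst sum.reindex[OF True]) simp
  moreover have "\<exists>j\<le>Suc ell. u (b ^ j) \<noteq> 0" using u(1) by (auto simp: S_def)
  ultimately show ?thesis using u(2) by (intro exI[of _ "\<lambda>j. u (b ^ j)"]) simp
next
  case False
  then obtain i j where ij: "i \<le> Suc ell" "j \<le> Suc ell" "i \<noteq> j" "b ^ i = b ^ j"
    unfolding inj_on_def by auto
  define a where "a = (\<lambda>k. (if k = i then 1 else 0) - (if k = j then 1 else (0::'k)))"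
  have h1: "(\<lambda>k. sB (if k = i then 1 else 0) (b ^ k)) = (\<lambda>k. if k = i then b ^ i else 0)"
    by (auto simp: sB_one vs.scale_zero_left)
  have h2: "(\<lambda>k. sB (if k = j then 1 else 0) (b ^ k)) = (\<lambda>k. if k = j then b ^ j else 0)"
    by (auto simp: sB_one vs.scale_zero_left)
  have "(\<Sum>k\<le>Suc ell. sB (a k) (b ^ k)) = (\<Sum>k\<le>Suc ell. sB (if k = i then 1 else 0) (b ^ k)) - (\<Sum>k\<le>Suc ell. sB (if k = j then 1 else 0) (b ^ k))"
    unfolding a_def by (simp add: vs.scale_left_diff_distrib sum_subtractf)
  also have "\<dots> = 0" unfolding h1 h2 using ij by simp
  finally show ?thesis using ij by (intro exI[of _ a]) (auto simp: a_def)
qed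

lemma inv_mod_P:
  fixes P :: "'b set"
  assumes P: "is_ring_ideal P" and prime: "\<forall>x y. x * y \<in> P \<longrightarrow> x \<in> P \<or> y \<in> P"
    and n1: "1 \<notin> P" and b: "b \<notin> P"
  shows "\<exists>b'. b * b' - 1 \<in> P"
proof -
  obtain a where a: "(\<Sum>j\<le>Suc ell. sB (a j) (b ^ j)) = 0" "\<exists>j\<le>Suc ell. a j \<noteq> 0"
    using dep_powers by blast
  have "0 \<in> P" using P by (simp add: is_ring_ideal_def)
  hence "(\<Sum>j\<le>Suc ell. sB (a j) (b ^ j)) \<in> P" using a(1) by simp
  thus ?thesis using spec[OF poly_inv[OF P prime n1 b, of "Suc ell"], of a] a(2) by blast
qed

lemma maximal_P:
  fixes P :: "'b set"
  assumes P: "is_ring_ideal P" and prime: "\<forall>x y. x * y \<in> P \<longrightarrow> x \<in> P \<or> y \<in> P"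
    and n1: "1 \<notin> P"
  shows "is_maximal_ideal P"
  unfolding is_maximal_ideal_def
proof (intro conjI allI impI)
  show "is_ring_ideal P" by fact
  show "P \<noteq> UNIV" using n1 by auto
  fix J assume J: "is_ring_ideal J \<and> P \<subseteq> J"
  show "J = P \<or> J = UNIV"
  proof (cases "J = P")
    case False
    then obtain b where b: "b \<in> J" "b \<notin> P" using J by blast
    obtain b' where b': "b * b' - 1 \<in> P" using inv_mod_P[OF P prime n1 b(2)] by blast
    have "b' * b \<in> J" using J b by (simp add: is_ring_ideal_def)
    hence bb: "b * b' \<in> J" by (simp add: mult.commute)
    have "b * b' - 1 \<in> J" using J b' by blast
    hence "b * b' - (b * b' - 1) \<in> J" using ideal_diff[of J, OF _ bb] J by blast
    moreover have "b * b' - (b * b' - 1) = 1" by simp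
    ultimately have one: "1 \<in> J" by metis
    have "\<forall>x. x \<in> J"
    proof
      fix x show "x \<in> J" using one J by (metis is_ring_ideal_def mult_1_right)
    qed
    hence "J = UNIV" by auto
    thus ?thesis by simp
  qed simp
qed

end



context Bsetup
begin

lemma unit_crit:
  assumes B_residue: "\<forall>n. is_maximal_ideal n \<longrightarrow> (\<forall>b. \<exists>c. b - sB c 1 \<in> n)"
    and y: "y \<in> D_carrier ell"
    and nz: "\<forall>\<phi>. is_k_alg_hom sB \<phi> \<longrightarrow> base_change \<iota> eps ell \<phi> y \<noteq> 0"
  shows "\<exists>z\<in>D_carrier ell. Dm z y = Done"
proof (rule ccontr)
  assume "\<not> ?thesis"
  hence ny: "\<forall>z\<in>D_carrier ell. Dm z y \<noteq> Done" by blast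
  obtain M where M: "Did M" "y \<in> M" "Done \<notin> M"
    and Mp: "\<forall>a\<in>D_carrier ell. \<forall>b\<in>D_carrier ell. Dm a b \<in> M \<longrightarrow> a \<in> M \<or> b \<in> M"
    using exists_prime[OF y ny] by blast
  define P where "P = {b. emb b \<in> M}"
  have PI: "is_ring_ideal P" unfolding is_ring_ideal_def P_def
  proof (intro conjI ballI allI CollectI)
    show "emb 0 \<in> M" using M(1) by (simp add: emb_zero Did_def)
    fix x y assume "x \<in> {b. emb b \<in> M}" "y \<in> {b. emb b \<in> M}"
    thus "emb (x + y) \<in> M" using M(1) by (simp add: emb_add Did_def)
  next
    fix x assume "x \<in> {b. emb b \<in> M}"
    thus "emb (- x) \<in> M" using M(1) by (simp add: emb_neg Did_scal)
  next
    fix a x assume "x \<in> {b. emb b \<in> M}"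
    thus "emb (a * x) \<in> M" using M(1) emb_carrier by (simp add: emb_mult Did_def)
  qed
  have Pprime: "\<forall>x y. x * y \<in> P \<longrightarrow> x \<in> P \<or> y \<in> P"
    using Mp emb_carrier by (simp add: P_def emb_mult)
  have P1: "1 \<notin> P" using M(3) by (simp add: P_def emb_one)
  have Pmax: "is_maximal_ideal P" by (rule maximal_P[OF PI Pprime P1])
  have res: "\<forall>b. \<exists>c. b - sB c 1 \<in> P" using B_residue Pmax by blast
  define \<phi> where "\<phi> b = (SOME c. b - sB c 1 \<in> P)" for b
  have phiP: "b - sB (\<phi> b) 1 \<in> P" for b
    unfolding \<phi>_def by (rule someI_ex[OF spec[OF res, of b]])
  have phi_uniq: "\<phi> b = c" if "b - sB c 1 \<in> P" for b c
  proof -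
    have "(b - sB c 1) - (b - sB (\<phi> b) 1) \<in> P" using ideal_diff[OF PI that phiP] .
    moreover have "(b - sB c 1) - (b - sB (\<phi> b) 1) = sB (\<phi> b - c) 1"
      by (simp add: vs.scale_left_diff_distrib)
    ultimately have "sB (\<phi> b - c) 1 \<in> P" by simp
    hence "\<phi> b - c = 0" by (rule ideal_one[OF PI P1])
    thus ?thesis by simp
  qed
  have hom: "is_k_alg_hom sB \<phi>" unfolding is_k_alg_hom_def
  proof (intro conjI allI)
    fix x y
    have "(x - sB (\<phi> x) 1) + (y - sB (\<phi> y) 1) \<in> P" using PI phiP by (simp add: is_ring_ideal_def)
    moreover have "(x - sB (\<phi> x) 1) + (y - sB (\<phi> y) 1) = (x + y) - sB (\<phi> x + \<phi> y) 1"
      by (simp add: sB_addL)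
    ultimately have "(x + y) - sB (\<phi> x + \<phi> y) 1 \<in> P" by simp
    thus "\<phi> (x + y) = \<phi> x + \<phi> y" by (rule phi_uniq)
  next
    fix x y
    have a: "(x - sB (\<phi> x) 1) * y \<in> P" using PI phiP by (simp add: is_ring_ideal_def mult.commute)
    have b: "sB (\<phi> x) 1 * (y - sB (\<phi> y) 1) \<in> P" using PI phiP by (simp add: is_ring_ideal_def)
    have "(x - sB (\<phi> x) 1) * y + sB (\<phi> x) 1 * (y - sB (\<phi> y) 1) \<in> P"
      using PI a b by (simp add: is_ring_ideal_def)
    moreover have "(x - sB (\<phi> x) 1) * y + sB (\<phi> x) 1 * (y - sB (\<phi> y) 1) = x * y - sB (\<phi> x * \<phi> y) 1"
    proof -
      have "sB (\<phi> x) 1 * sB (\<phi> y) 1 = sB (\<phi> x) (1 * sB (\<phi> y) 1)"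
        by (simp only: sB_multL[symmetric] mult_1)
      also have "\<dots> = sB (\<phi> x * \<phi> y) 1" by (simp add: sB_assoc)
      finally have e: "sB (\<phi> x) 1 * sB (\<phi> y) 1 = sB (\<phi> x * \<phi> y) 1" .
      show ?thesis by (simp add: algebra_simps e)
    qed
    ultimately have "x * y - sB (\<phi> x * \<phi> y) 1 \<in> P" by simp
    thus "\<phi> (x * y) = \<phi> x * \<phi> y" by (rule phi_uniq)
  next
    have "1 - sB 1 1 \<in> P" using PI by (simp add: sB_one is_ring_ideal_def)
    thus "\<phi> 1 = 1" by (rule phi_uniq)
  next
    fix c x
    have "sB c (x - sB (\<phi> x) 1) \<in> P" using ideal_smul[OF PI phiP] .
    moreover have "sB c (x - sB (\<phi> x) 1) = sB c x - sB (c * \<phi> x) 1"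
      by (simp add: vs.scale_right_diff_distrib sB_assoc)
    ultimately have "sB c x - sB (c * \<phi> x) 1 \<in> P" by simp
    thus "\<phi> (sB c x) = c * \<phi> x" by (rule phi_uniq)
  qed
  define bc where "bc = base_change \<iota> eps ell \<phi> y"
  have bcnz: "bc \<noteq> 0" using nz hom by (simp add: bc_def)
  define q where "q i = eps i - sB (\<phi> (eps i)) 1" for i
  have qM: "emb (q i) \<in> M" for i using phiP by (simp add: q_def P_def)
  have emb_q: "emb (q i) n = \<iota> (coord (eps i) n) - \<iota> (\<phi> (eps i)) * \<iota> (coord 1 n)" for i n
  proof -
    have "emb (q i) = D_add (emb (eps i)) (scal (-1) (emb (sB (\<phi> (eps i)) 1)))"
      unfolding q_def diff_conv_add_uminus emb_add emb_neg by (rule refl)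
    hence "emb (q i) = D_add (emb (eps i)) (scal (-1) (scal (\<iota> (\<phi> (eps i))) (emb 1)))"
      by (simp only: emb_smul)
    thus ?thesis by (simp add: D_add_def scal_def emb_def)
  qed
  define Z where "Z = (\<lambda>n. \<Sum>i\<le>ell. scal (y i) (emb (q i)) n)"
  have ZM: "Z \<in> M" unfolding Z_def by (rule Did_sum[OF M(1)]) (auto intro: Did_scal[OF M(1)] qM)
  have Zn: "Z n = y n - bc * \<iota> (coord 1 n)" for n
  proof -
    have "Z n = (\<Sum>i\<le>ell. y i * \<iota> (coord (eps i) n) - \<iota> (\<phi> (eps i)) * y i * \<iota> (coord 1 n))"
      unfolding Z_def scal_def emb_q by (intro sum.cong refl) (simp add: algebra_simps)
    also have "\<dots> = (\<Sum>i\<le>ell. y i * \<iota> (coord (eps i) n)) - (\<Sum>i\<le>ell. \<iota> (\<phi> (eps i)) * y i) * \<iota> (coord 1 n)"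
      by (simp only: sum_subtractf sum_distrib_right)
    also have "(\<Sum>i\<le>ell. y i * \<iota> (coord (eps i) n)) = y n"
    proof -
      have "(\<Sum>i\<le>ell. y i * \<iota> (coord (eps i) n)) = (\<Sum>i\<le>ell. if i = n then y n else 0)"
        by (intro sum.cong refl) (auto simp: coord_eps iota_one iota_zero)
      also have "\<dots> = y n" using y by (auto simp: D_carrier_def not_le)
      finally show ?thesis .
    qed
    finally show ?thesis by (simp add: bc_def base_change_def)
  qed
  have "D_add y (scal (-1) Z) \<in> M" using M ZM Did_scal[OF M(1) ZM] by (simp add: Did_def)
  moreover have "D_add y (scal (-1) Z) = scal bc Done"
    by (rule ext) (simp add: D_add_def scal_def Zn D_one_def)
  ultimately have "scal bc Done \<in> M" by simp
  hence "scal (inverse bc) (scal bc Done) \<in> M" by (rule Did_scal[OF M(1)])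
  moreover have "scal (inverse bc) (scal bc Done) = Done"
    using bcnz by (simp add: scal_def mult.assoc[symmetric])
  ultimately show False using M(3) by simp
qed

end



lemma L_quot:
  fixes \<delta> :: "'L::field \<Rightarrow> 'L"
  assumes add: "\<forall>a b. \<delta> (a + b) = \<delta> a + \<delta> b" and mul: "\<forall>a b. \<delta> (a * b) = a * \<delta> b + \<delta> a * b"
    and b: "b \<noteq> 0"
  shows "\<delta> (a / b) * (b * b) = b * \<delta> a - a * \<delta> b"
proof -
  have "a = (a / b) * b" using b by simp
  hence "\<delta> a = (a / b) * \<delta> b + \<delta> (a / b) * b" using mul by metis
  hence "\<delta> (a / b) * b = \<delta> a - (a / b) * \<delta> b" by (simp add: algebra_simps)
  hence "\<delta> (a / b) * b * b = (\<delta> a - (a / b) * \<delta> b) * b" by simp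
  thus ?thesis using b by (simp add: algebra_simps)
qed

context Bsetup
begin

lemma Dm_lcomm: "Dm x (Dm y z) = Dm y (Dm x z)"
  by (metis Dm_assoc Dm_comm)

definition Dsub :: "(nat \<Rightarrow> 'L) \<Rightarrow> (nat \<Rightarrow> 'L) \<Rightarrow> nat \<Rightarrow> 'L" where
  "Dsub x y = (\<lambda>n. x n - y n)"

lemma Dm_sub: "Dm (Dsub x y) z = Dsub (Dm x z) (Dm y z)"
  by (rule ext) (simp add: Dm_eq Dsub_def algebra_simps sum_subtractf)

lemma Dm_addR: "Dm z (D_add x y) = D_add (Dm z x) (Dm z y)"
  by (metis Dm_comm Dm_distr)

definition isU where "isU u \<longleftrightarrow> u \<in> D_carrier ell \<and> (\<exists>z\<in>D_carrier ell. Dm z u = Done)"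
definition Dinv where "Dinv u = (SOME z. z \<in> D_carrier ell \<and> Dm z u = Done)"

lemma Dinv: "isU u \<Longrightarrow> Dinv u \<in> D_carrier ell \<and> Dm (Dinv u) u = Done"
  using someI_ex[of "\<lambda>z. z \<in> D_carrier ell \<and> Dm z u = Done"] unfolding isU_def Dinv_def by blast

lemma Dinv_r: "isU u \<Longrightarrow> Dm u (Dinv u) = Done"
  using Dinv Dm_comm by metis

lemma cancel:
  assumes u: "isU u" and x: "x \<in> D_carrier ell" and y: "y \<in> D_carrier ell" and eq: "Dm x u = Dm y u"
  shows "x = y"
proof -
  have "Dm (Dm x u) (Dinv u) = Dm (Dm y u) (Dinv u)" using eq by simp
  hence "Dm x Done = Dm y Done" by (simp add: Dm_assoc Dinv_r[OF u])
  thus ?thesis using x y by (simp add: Dm_comm[of _ Done] Dm_one)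
qed

end

locale Msetup = Bsetup sB eps ell \<iota> for sB :: "'k::field \<Rightarrow> 'b::comm_ring_1 \<Rightarrow> 'b" and eps ell
   and \<iota> :: "'k \<Rightarrow> 'L::field" +
  fixes m :: nat and d :: "nat \<Rightarrow> 'L \<Rightarrow> 'L" and R :: "'L set" and e :: "'L \<Rightarrow> nat \<Rightarrow> 'L"
  assumes B_residue: "\<forall>n. is_maximal_ideal n \<longrightarrow> (\<forall>b. \<exists>c. b - sB c 1 \<in> n)"
    and L_Delta: "is_k_Delta_field \<iota> m d"
    and R_sub: "is_Delta_subring_over_k \<iota> m d R"
    and e_hom: "is_Delta_hom_to_D \<iota> sB eps ell m d R e"
    and e_inj: "\<forall>\<phi>. is_k_alg_hom sB \<phi> \<longrightarrow> inj_on (\<lambda>r. base_change \<iota> eps ell \<phi> (e r)) R"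
begin

lemma R0: "0 \<in> R" and R1: "1 \<in> R" and Radd: "x \<in> R \<Longrightarrow> y \<in> R \<Longrightarrow> x + y \<in> R"
  and Rmult: "x \<in> R \<Longrightarrow> y \<in> R \<Longrightarrow> x * y \<in> R" and Rneg: "x \<in> R \<Longrightarrow> - x \<in> R"
  and Rd: "j < m \<Longrightarrow> x \<in> R \<Longrightarrow> d j x \<in> R"
  using R_sub by (auto simp: is_Delta_subring_over_k_def)

lemma Rsub: "x \<in> R \<Longrightarrow> y \<in> R \<Longrightarrow> x - y \<in> R"
  using Radd Rneg by (metis diff_conv_add_uminus)

lemma e_carrier: "x \<in> R \<Longrightarrow> e x \<in> D_carrier ell"
  and e_add: "x \<in> R \<Longrightarrow> y \<in> R \<Longrightarrow> e (x + y) = D_add (e x) (e y)"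
  and e_mult: "x \<in> R \<Longrightarrow> y \<in> R \<Longrightarrow> e (x * y) = Dm (e x) (e y)"
  and e_one: "e 1 = Done"
  and e_der: "j < m \<Longrightarrow> x \<in> R \<Longrightarrow> e (d j x) = D_der (d j) (e x)"
  using e_hom by (auto simp: is_Delta_hom_to_D_def)

lemma e_sub: "x \<in> R \<Longrightarrow> y \<in> R \<Longrightarrow> e (x - y) = Dsub (e x) (e y)"
proof -
  assume x: "x \<in> R" and y: "y \<in> R"
  have "e x = D_add (e (x - y)) (e y)" using e_add[OF Rsub[OF x y] y] by simp
  thus ?thesis by (simp add: Dsub_def D_add_def)
qed

lemma e_zero: "e 0 = (\<lambda>_. 0)"
proof -
  have "e 0 = D_add (e 0) (e 0)" using e_add[OF R0 R0] by simp
  hence "e 0 n = e 0 n + e 0 n" for n by (metis D_add_def)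
  hence "e 0 n = 0" for n by (simp only: add_cancel_right_right)
  thus ?thesis by (simp add: fun_eq_iff)
qed

lemma e_unit: "r \<in> R \<Longrightarrow> r \<noteq> 0 \<Longrightarrow> isU (e r)"
proof -
  assume r: "r \<in> R" "r \<noteq> 0"
  have "\<forall>\<phi>. is_k_alg_hom sB \<phi> \<longrightarrow> base_change \<iota> eps ell \<phi> (e r) \<noteq> 0"
  proof (intro allI impI)
    fix \<phi> assume h: "is_k_alg_hom sB \<phi>"
    have "base_change \<iota> eps ell \<phi> (e 0) = 0" by (simp add: e_zero base_change_def)
    thus "base_change \<iota> eps ell \<phi> (e r) \<noteq> 0"
      using e_inj h r R0 unfolding inj_on_def by metis
  qed
  thus ?thesis using unit_crit[OF B_residue e_carrier[OF r(1)]] e_carrier[OF r(1)]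
    by (simp add: isU_def)
qed

lemma d_add: "j < m \<Longrightarrow> d j (a + b) = d j a + d j b"
  using L_Delta unfolding is_k_Delta_field_def by blast
lemma d_mult: "j < m \<Longrightarrow> d j (a * b) = a * d j b + d j a * b"
  using L_Delta unfolding is_k_Delta_field_def by blast
lemma d_lin: "j < m \<Longrightarrow> d j (\<iota> c * a) = \<iota> c * d j a"
  using L_Delta unfolding is_k_Delta_field_def by blast

lemma d_zero: "j < m \<Longrightarrow> d j 0 = 0"
proof -
  assume j: "j < m"
  have "d j 0 = d j 0 + d j 0" using d_add[OF j, of 0 0] by simp
  thus ?thesis by (simp only: add_cancel_right_right)
qed

lemma d_sum: "j < m \<Longrightarrow> d j (sum f A) = (\<Sum>a\<in>A. d j (f a))"
  by (induction A rule: infinite_finite_induct) (simp_all add: d_zero d_add)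

lemma d_one: "j < m \<Longrightarrow> d j 1 = 0"
proof -
  assume j: "j < m"
  have "d j 1 = d j 1 + d j 1" using d_mult[OF j, of 1 1] by simp
  thus ?thesis by (simp only: add_cancel_right_right)
qed

lemma Der_carrier: "j < m \<Longrightarrow> x \<in> D_carrier ell \<Longrightarrow> D_der (d j) x \<in> D_carrier ell"
  by (simp add: D_der_def D_carrier_def d_zero)

lemma Der_add: "j < m \<Longrightarrow> D_der (d j) (D_add x y) = D_add (D_der (d j) x) (D_der (d j) y)"
  by (rule ext) (simp add: D_der_def D_add_def d_add)

lemma Der_mult: "j < m \<Longrightarrow> D_der (d j) (Dm x y) = D_add (Dm x (D_der (d j) y)) (Dm (D_der (d j) x) y)"
proof (rule ext)
  fix n assume j: "j < m"
  have "D_der (d j) (Dm x y) n = (\<Sum>i\<le>ell. \<Sum>k\<le>ell. d j (\<iota> (cc i k n) * (x i * y k)))"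
    by (simp add: D_der_def Dm_eq d_sum j mult.assoc)
  also have "\<dots> = (\<Sum>i\<le>ell. \<Sum>k\<le>ell. \<iota> (cc i k n) * x i * d j (y k) + \<iota> (cc i k n) * d j (x i) * y k)"
    by (intro sum.cong refl) (subst d_lin[OF j], subst d_mult[OF j], simp add: algebra_simps)
  also have "\<dots> = D_add (Dm x (D_der (d j) y)) (Dm (D_der (d j) x) y) n"
    by (simp add: D_add_def Dm_eq D_der_def sum.distrib)
  finally show "D_der (d j) (Dm x y) n = D_add (Dm x (D_der (d j) y)) (Dm (D_der (d j) x) y) n" .
qed

end



context Msetup
begin

lemma Frac_iff: "q \<in> Frac_in R \<longleftrightarrow> (\<exists>b\<in>R. b \<noteq> 0 \<and> q * b \<in> R)"
proof
  assume "q \<in> Frac_in R"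
  then obtain a b where "a \<in> R" "b \<in> R" "b \<noteq> 0" "q = a / b" by (auto simp: Frac_in_def)
  thus "\<exists>b\<in>R. b \<noteq> 0 \<and> q * b \<in> R" by auto
next
  assume "\<exists>b\<in>R. b \<noteq> 0 \<and> q * b \<in> R"
  then obtain b where b: "b \<in> R" "b \<noteq> 0" "q * b \<in> R" by blast
  hence "q = (q * b) / b" by simp
  thus "q \<in> Frac_in R" using b unfolding Frac_in_def by blast
qed

lemma R_Frac: "r \<in> R \<Longrightarrow> r \<in> Frac_in R"
proof -
  assume r: "r \<in> R"
  have "1 \<in> R \<and> (1::'L) \<noteq> 0 \<and> r * 1 \<in> R" using R1 r by simp
  thus ?thesis unfolding Frac_iff by blast
qed

definition F :: "'L \<Rightarrow> nat \<Rightarrow> 'L" where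
  "F q = (let p = (SOME p. fst p \<in> R \<and> snd p \<in> R \<and> snd p \<noteq> 0 \<and> q = fst p / snd p)
          in Dm (e (fst p)) (Dinv (e (snd p))))"

lemma F_key:
  assumes q: "q \<in> Frac_in R"
  shows "F q \<in> D_carrier ell \<and> (\<forall>b\<in>R. b \<noteq> 0 \<and> q * b \<in> R \<longrightarrow> Dm (F q) (e b) = e (q * b))"
proof -
  define p where "p = (SOME p. fst p \<in> R \<and> snd p \<in> R \<and> snd p \<noteq> 0 \<and> q = fst p / snd p)"
  have ex: "\<exists>p. fst p \<in> R \<and> snd p \<in> R \<and> snd p \<noteq> 0 \<and> q = fst p / snd p"
    using q by (auto simp: Frac_in_def)
  have p: "fst p \<in> R" "snd p \<in> R" "snd p \<noteq> 0" "q = fst p / snd p"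
    using someI_ex[OF ex] unfolding p_def by blast+
  have Fq: "F q = Dm (e (fst p)) (Dinv (e (snd p)))" unfolding F_def p_def Let_def ..
  have U: "isU (e (snd p))" using e_unit p by blast
  show ?thesis
  proof (intro conjI ballI impI)
    show "F q \<in> D_carrier ell" using Fq Dm_closed by simp
    fix b assume b: "b \<in> R" "b \<noteq> 0 \<and> q * b \<in> R"
    have "fst p * b = (q * b) * snd p" using p(3,4) by simp
    hence eq: "Dm (e (fst p)) (e b) = Dm (e (q * b)) (e (snd p))"
      using e_mult p b by metis
    have "Dm (F q) (e b) = Dm (Dm (e (fst p)) (e b)) (Dinv (e (snd p)))"
      unfolding Fq by (simp add: Dm_assoc Dm_comm[of "Dinv _"])
    also have "\<dots> = Dm (e (q * b)) (Dm (e (snd p)) (Dinv (e (snd p))))"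
      unfolding eq by (simp add: Dm_assoc)
    also have "\<dots> = e (q * b)"
      using Dinv_r[OF U] Dm_comm[of _ Done] Dm_one e_carrier b by simp
    finally show "Dm (F q) (e b) = e (q * b)" .
  qed
qed

lemma F_carrier: "q \<in> Frac_in R \<Longrightarrow> F q \<in> D_carrier ell"
  using F_key by blast

lemma F_eq: "q \<in> Frac_in R \<Longrightarrow> b \<in> R \<Longrightarrow> b \<noteq> 0 \<Longrightarrow> q * b \<in> R \<Longrightarrow> Dm (F q) (e b) = e (q * b)"
  using F_key by blast

lemma F_char:
  assumes q: "q \<in> Frac_in R" and b: "b \<in> R" "b \<noteq> 0" "q * b \<in> R"
    and z: "z \<in> D_carrier ell" "Dm z (e b) = e (q * b)"
  shows "F q = z"
  using cancel[OF e_unit[OF b(1,2)] F_carrier[OF q] z(1)] F_eq[OF q b] z(2) by simp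

lemma F_R: "r \<in> R \<Longrightarrow> F r = e r"
  using F_char[OF R_Frac R1, of r "e r"] e_carrier e_one Dm_comm[of _ Done] Dm_one by simp

lemma F_add:
  assumes x: "x \<in> Frac_in R" and y: "y \<in> Frac_in R"
  shows "x + y \<in> Frac_in R \<and> F (x + y) = D_add (F x) (F y)"
proof -
  obtain bx where bx: "bx \<in> R" "bx \<noteq> 0" "x * bx \<in> R" using x Frac_iff by blast
  obtain by' where by': "by' \<in> R" "by' \<noteq> 0" "y * by' \<in> R" using y Frac_iff by blast
  define B where "B = bx * by'"
  have B: "B \<in> R" "B \<noteq> 0" using bx by' Rmult by (auto simp: B_def)
  have eqL: "(x + y) * B = (x * bx) * by' + (y * by') * bx" by (simp add: B_def algebra_simps)
  have xyB: "(x + y) * B \<in> R" using eqL Radd Rmult bx by' by metis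
  have xy: "x + y \<in> Frac_in R" using B xyB Frac_iff by blast
  have "Dm (D_add (F x) (F y)) (e B) = D_add (Dm (F x) (e B)) (Dm (F y) (e B))" by (rule Dm_distr)
  also have "Dm (F x) (e B) = Dm (Dm (F x) (e bx)) (e by')"
    by (simp add: B_def e_mult bx by' Dm_assoc)
  also have "\<dots> = e ((x * bx) * by')" using F_eq[OF x bx] e_mult bx by' by simp
  also have "Dm (F y) (e B) = Dm (Dm (F y) (e by')) (e bx)"
    by (simp add: B_def e_mult bx by' Dm_assoc Dm_comm[of "e bx"])
  also have "\<dots> = e ((y * by') * bx)" using F_eq[OF y by'] e_mult bx by' by simp
  also have "D_add (e ((x * bx) * by')) (e ((y * by') * bx)) = e ((x + y) * B)"
    unfolding eqL using e_add Rmult bx by' by metis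
  finally have "Dm (D_add (F x) (F y)) (e B) = e ((x + y) * B)" .
  moreover have "D_add (F x) (F y) \<in> D_carrier ell"
    using F_carrier x y by (simp add: D_carrier_def D_add_def)
  ultimately show ?thesis using F_char[OF xy B xyB] xy by simp
qed

lemma F_mult:
  assumes x: "x \<in> Frac_in R" and y: "y \<in> Frac_in R"
  shows "x * y \<in> Frac_in R \<and> F (x * y) = Dm (F x) (F y)"
proof -
  obtain bx where bx: "bx \<in> R" "bx \<noteq> 0" "x * bx \<in> R" using x Frac_iff by blast
  obtain by' where by': "by' \<in> R" "by' \<noteq> 0" "y * by' \<in> R" using y Frac_iff by blast
  define B where "B = bx * by'"
  have B: "B \<in> R" "B \<noteq> 0" using bx by' Rmult by (auto simp: B_def)
  have eqL: "(x * y) * B = (x * bx) * (y * by')" by (simp add: B_def algebra_simps)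
  have xyB: "(x * y) * B \<in> R" using eqL Rmult bx by' by metis
  have xy: "x * y \<in> Frac_in R" using B xyB Frac_iff by blast
  have "Dm (Dm (F x) (F y)) (e B) = Dm (Dm (F x) (e bx)) (Dm (F y) (e by'))"
    by (simp add: B_def e_mult bx by' Dm_assoc Dm_lcomm)
  also have "\<dots> = e ((x * y) * B)"
    unfolding eqL using F_eq[OF x bx] F_eq[OF y by'] e_mult bx by' by simp
  finally have "Dm (Dm (F x) (F y)) (e B) = e ((x * y) * B)" .
  thus ?thesis using F_char[OF xy B xyB] xy Dm_closed by simp
qed

lemma F_der:
  assumes x: "x \<in> Frac_in R" and j: "j < m"
  shows "F (d j x) = D_der (d j) (F x)"
proof -
  obtain b where b: "b \<in> R" "b \<noteq> 0" "x * b \<in> R" using x Frac_iff by blast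
  define a where "a = x * b"
  have a: "a \<in> R" using b by (simp add: a_def)
  have xa: "x = a / b" using b by (simp add: a_def)
  have dq: "d j x * (b * b) = b * d j a - a * d j b"
    unfolding xa by (rule L_quot) (use b d_add[OF j] d_mult[OF j] in auto)
  have BB: "b * b \<in> R" "b * b \<noteq> 0" using b Rmult by auto
  have dxB: "d j x * (b * b) \<in> R" unfolding dq using Rsub Rmult Rd[OF j] a b by metis
  have dx: "d j x \<in> Frac_in R" using BB dxB Frac_iff by blast
  have Fxb: "Dm (F x) (e b) = e a" using F_eq[OF x b] by (simp add: a_def)
  have "D_der (d j) (Dm (F x) (e b)) = e (d j a)" using Fxb e_der[OF j a] by simp
  hence "D_add (Dm (F x) (D_der (d j) (e b))) (Dm (D_der (d j) (F x)) (e b)) = e (d j a)"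
    by (simp add: Der_mult[OF j])
  hence "D_add (Dm (F x) (e (d j b))) (Dm (D_der (d j) (F x)) (e b)) = e (d j a)"
    by (simp add: e_der[OF j b(1)])
  hence h1: "Dm (D_der (d j) (F x)) (e b) = Dsub (e (d j a)) (Dm (F x) (e (d j b)))"
    by (auto simp: D_add_def Dsub_def fun_eq_iff algebra_simps)
  have "Dm (D_der (d j) (F x)) (e (b * b)) = Dm (Dm (D_der (d j) (F x)) (e b)) (e b)"
    by (simp add: e_mult b Dm_assoc)
  also have "\<dots> = Dsub (Dm (e (d j a)) (e b)) (Dm (Dm (F x) (e (d j b))) (e b))"
    unfolding h1 by (rule Dm_sub)
  also have "Dm (Dm (F x) (e (d j b))) (e b) = Dm (Dm (F x) (e b)) (e (d j b))"
    by (simp add: Dm_assoc Dm_comm[of "e b"])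
  also have "\<dots> = e (a * d j b)" using Fxb e_mult a Rd[OF j b(1)] by simp
  also have "Dm (e (d j a)) (e b) = e (b * d j a)" using e_mult Rd[OF j a] b Dm_comm by metis
  also have "Dsub (e (b * d j a)) (e (a * d j b)) = e (d j x * (b * b))"
    unfolding dq using e_sub Rmult Rd[OF j] a b by metis
  finally have "Dm (D_der (d j) (F x)) (e (b * b)) = e (d j x * (b * b))" .
  thus ?thesis using F_char[OF dx BB dxB] Der_carrier[OF j F_carrier[OF x]] by simp
qed

lemma F_hom: "is_Delta_hom_to_D \<iota> sB eps ell m d (Frac_in R) F"
  unfolding is_Delta_hom_to_D_def
  using F_carrier F_add F_mult F_R[OF R1] e_one F_der by auto

lemma F_unique:
  assumes g: "is_Delta_hom_to_D \<iota> sB eps ell m d (Frac_in R) g" and gR: "\<forall>r\<in>R. g r = e r"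
    and x: "x \<in> Frac_in R"
  shows "g x = F x"
proof -
  obtain b where b: "b \<in> R" "b \<noteq> 0" "x * b \<in> R" using x Frac_iff by blast
  have "g (x * b) = Dm (g x) (g b)" using g x R_Frac[OF b(1)] by (simp add: is_Delta_hom_to_D_def)
  hence "Dm (g x) (e b) = e (x * b)" using gR b by simp
  moreover have "g x \<in> D_carrier ell" using g x by (simp add: is_Delta_hom_to_D_def)
  ultimately show ?thesis using F_char[OF x b] by simp
qed

end


theorem lemma4p3:
  fixes sB :: "'k::field_char_0 \<Rightarrow> 'b::comm_ring_1 \<Rightarrow> 'b"
    and eps :: "nat \<Rightarrow> 'b" and ell :: nat
    and \<pi> :: "'b \<Rightarrow> 'k"
    and \<iota> :: "'k \<Rightarrow> 'L::field"
    and m :: nat and d :: "nat \<Rightarrow> 'L \<Rightarrow> 'L"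
    and R :: "'L set"
    and e :: "'L \<Rightarrow> nat \<Rightarrow> 'L"
  assumes B_alg: "is_k_algebra sB"
    and B_basis: "is_k_basis sB eps ell"
    and B_residue: "\<forall>n. is_maximal_ideal n \<longrightarrow> (\<forall>b. \<exists>c. b - sB c 1 \<in> n)"
    and pi_hom: "is_k_alg_hom sB \<pi>"
    and pi_eps0: "\<pi> (eps 0) = 1"
    and pi_eps: "\<forall>i. 0 < i \<and> i \<le> ell \<longrightarrow> \<pi> (eps i) = 0"
    and k_in_L: "is_ring_hom \<iota>"
    and L_Delta: "is_k_Delta_field \<iota> m d"
    and R_sub: "is_Delta_subring_over_k \<iota> m d R"
    and e_hom: "is_Delta_hom_to_D \<iota> sB eps ell m d R e"
    and e_klin: "\<forall>c. \<forall>r\<in>R. e (\<iota> c * r) = D_smult \<iota> c (e r)"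
    and e_inj: "\<forall>\<phi>. is_k_alg_hom sB \<phi> \<longrightarrow> inj_on (\<lambda>r. base_change \<iota> eps ell \<phi> (e r)) R"
  shows "\<exists>f. is_Delta_hom_to_D \<iota> sB eps ell m d (Frac_in R) f \<and> (\<forall>r\<in>R. f r = e r) \<and>
           (\<forall>g. is_Delta_hom_to_D \<iota> sB eps ell m d (Frac_in R) g \<and> (\<forall>r\<in>R. g r = e r)
                \<longrightarrow> (\<forall>x\<in>Frac_in R. g x = f x))"
  proof -
  interpret M: Msetup sB eps ell \<iota> m d R e
    unfolding Msetup_def Bsetup_def Msetup_axioms_def
    using B_alg B_basis k_in_L B_residue L_Delta R_sub e_hom e_inj by blast
  show ?thesis using M.F_hom M.F_R M.F_unique by blast
qed

end
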